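(* Let $G=C_2^3\oplus C_4$ and let $U$ be a minimal zero-sum sequence over $G$ with $|U|=\mathsf D(G)=7$. Then $3\notin\mathsf L\big(U(-U)\big)$.
   Context: $C_n$ denotes a cyclic group of order $n$ and $C_2^r$ an elementary abelian $2$-group of rank $r$. For a finite abelian group $G$, a sequence over $G$ is an element of the free abelian monoid $\mathcal F(G)$ with basis $G$ (a finite unordered list of elements of $G$, repetitions allowed, written multiplicatively); its length $|S|$ is its number of terms; for $S=g_1\cdots g_\ell$, $-S=(-g_1)\cdots(-g_\ell)$. $\mathcal B(G)$ is the monoid of zero-sum sequences over $G$. A minimal zero-sum sequence (atom) is a nonempty zero-sum sequence that is not a product of two nonempty zero-sum sequences. For $B\in\mathcal B(G)$, $\mathsf L(B)=\{k\in\mathbb N_0: B \text{ is a product of } k \text{ atoms}\}$. The Davenport constant $\mathsf D(G)$ is the maximal length of an atom over $G$. *)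

theory Defs
  imports Main "HOL-Library.Multiset" "HOL-Library.Numeral_Type" "HOL-Library.Product_Plus"
begin

type_synonym G = "2 \<times> 2 \<times> 2 \<times> 4"

text \<open>Sequences over an abelian group are finite multisets; the product of sequences is
  multiset sum, and -S is the image under negation.\<close>
definition zero_sum :: "'a::ab_group_add multiset \<Rightarrow> bool" where
  "zero_sum S \<longleftrightarrow> sum_mset S = 0"

definition neg_seq :: "'a::ab_group_add multiset \<Rightarrow> 'a multiset" where
  "neg_seq S = image_mset uminus S"

definition atom :: "'a::ab_group_add multiset \<Rightarrow> bool" where
  "atom A \<longleftrightarrow> A \<noteq> {#} \<and> zero_sum A \<and>
     \<not> (\<exists>S T. S \<noteq> {#} \<and> T \<noteq> {#} \<and> zero_sum S \<and> zero_sum T \<and> A = S + T)"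

definition lengths :: "'a::ab_group_add multiset \<Rightarrow> nat set" where
  "lengths B = {k. \<exists>F :: 'a multiset multiset.
      (\<forall>A\<in>#F. atom A) \<and> sum_mset F = B \<and> size F = k}"

end

theory Submission
  imports Defs
begin

definition zz :: G where "zz = (0,0,0,2)"

lemma two4: "(x::4) + x = 0 \<or> x + x = 2"
proof (cases x)
  case (of_int z)
  then have "z = 0 \<or> z = 1 \<or> z = 2 \<or> z = 3" by auto
  then show ?thesis using of_int by (auto simp flip: of_int_add)
qed

lemma two2: "(x::2) + x = 0"
proof (cases x)
  case (of_int z)
  then have "z = 0 \<or> z = 1" by auto
  then show ?thesis using of_int by (auto simp flip: of_int_add)
qed

lemma dblG: "(g::G) + g \<in> {0, zz}"
proof -
  obtain a b c d where g: "g = (a,b,c,d)" by (cases g) auto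
  show ?thesis using two4[of d] two2[of a] two2[of b] two2[of c]
    by (auto simp: g zz_def zero_prod_def)
qed

lemma zz_ne: "zz \<noteq> 0" by (simp add: zz_def zero_prod_def)
lemma zz_add: "zz + zz = 0"
  by (simp add: zz_def zero_prod_def)
lemma zz_neg: "- zz = zz"
  by (simp add: zz_def)

lemma K_add: "a \<in> {0, zz} \<Longrightarrow> b \<in> {0, zz} \<Longrightarrow> a + b \<in> {0, zz::G}"
  using zz_add by auto
lemma K_neg: "a \<in> {0, zz} \<Longrightarrow> - a \<in> {0, zz::G}"
  using zz_neg by auto


lemma sum_neg: "sum_mset (neg_seq T) = - sum_mset (T::'a::ab_group_add multiset)"
  unfolding neg_seq_def by (induction T) auto

lemma neg_neg: "neg_seq (neg_seq T) = (T::'a::ab_group_add multiset)"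
  unfolding neg_seq_def by (induction T) auto

lemma neg_plus: "neg_seq (A + B) = neg_seq A + neg_seq (B::'a::ab_group_add multiset)"
  unfolding neg_seq_def by simp

lemma neg_empty_iff: "neg_seq T = {#} \<longleftrightarrow> T = {#}"
  unfolding neg_seq_def by simp

lemma size_neg: "size (neg_seq T) = size T"
  unfolding neg_seq_def by simp

lemma atom_sub:
  assumes "atom W" "R \<subseteq># W" "zero_sum R" "R \<noteq> {#}"
  shows "R = W"
proof (rule ccontr)
  assume ne: "R \<noteq> W"
  have W: "W = R + (W - R)" using assms(2) by (simp add: subset_mset.add_diff_inverse)
  have "W - R \<noteq> {#}" using ne assms(2) W by (metis add_cancel_right_right)
  moreover have "zero_sum (W - R)" using assms(1,2,3)
    by (simp add: atom_def zero_sum_def sum_mset_diff)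
  ultimately show False using assms W unfolding atom_def by blast
qed

lemma riesz:
  fixes A B X Y :: "'a multiset"
  assumes "A + B = X + Y"
  shows "\<exists>X1 Y1 X2 Y2. A = X1 + Y1 \<and> B = X2 + Y2 \<and> X = X1 + X2 \<and> Y = Y1 + Y2"
proof -
  have c: "count A y + count B y = count X y + count Y y" for y
    using assms by (metis count_union)
  define X1 where "X1 = A \<inter># X"
  define Y1 where "Y1 = A - X1"
  define X2 where "X2 = X - X1"
  define Y2 where "Y2 = B - X2"
  have "A = X1 + Y1" by (rule multiset_eqI) (simp add: X1_def Y1_def)
  moreover have "B = X2 + Y2"
  proof (rule multiset_eqI)
    fix y show "count B y = count (X2 + Y2) y"
      using c[of y] by (simp add: X1_def X2_def Y2_def)
  qed
  moreover have "X = X1 + X2" by (rule multiset_eqI) (simp add: X1_def X2_def)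
  moreover have "Y = Y1 + Y2"
  proof (rule multiset_eqI)
    fix y show "count Y y = count (Y1 + Y2) y"
      using c[of y] by (simp add: X1_def X2_def Y1_def Y2_def)
  qed
  ultimately show ?thesis by blast
qed


lemma pair_lemma:
  fixes S T :: "'a::ab_group_add multiset"
  assumes "atom W" "W = S + neg_seq T" "x \<in># S" "x \<in># T"
  shows "S = {#x#} \<and> T = {#x#}"
proof -
  have S: "S = add_mset x (S - {#x#})" using assms(3) by simp
  have T: "T = add_mset x (T - {#x#})" using assms(4) by simp
  have N: "neg_seq T = add_mset (-x) (neg_seq (T - {#x#}))"
    by (subst T) (simp add: neg_seq_def)
  have "W = add_mset x (S - {#x#}) + add_mset (-x) (neg_seq (T - {#x#}))"
    using assms(2) S N by simp
  then have W: "W = add_mset x (add_mset (-x) ((S - {#x#}) + neg_seq (T - {#x#})))"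
    by simp
  have "{#x, -x#} \<subseteq># W" by (subst W) simp
  moreover have "zero_sum {#x, -x#}" by (simp add: zero_sum_def)
  ultimately have E: "{#x, -x#} = W" using atom_sub[OF assms(1)] by simp
  have "size W = 2" unfolding E[symmetric] by simp
  then have "size S + size T = 2" using assms(2) by (simp add: size_neg)
  moreover have "size S \<ge> 1" "size T \<ge> 1" using assms(3,4)
    by (auto simp: Suc_le_eq nonempty_has_size dest!: multi_member_split)
  ultimately have "size S = 1" "size T = 1" by auto
  then obtain a b where "S = {#a#}" "T = {#b#}" by (meson size_1_singleton_mset)
  then show ?thesis using assms(3,4) by simp
qed


definition subs :: "G multiset \<Rightarrow> G set" where
  "subs V = {sum_mset R + k | R k. R \<subseteq># V \<and> k \<in> {0, zz}}"

definition Kzsf :: "G multiset \<Rightarrow> bool" where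
  "Kzsf V \<longleftrightarrow> (\<forall>R. R \<subseteq># V \<longrightarrow> R \<noteq> {#} \<longrightarrow> sum_mset R \<notin> {0, zz})"

lemma subs_empty: "subs {#} = {0, zz}"
  unfolding subs_def by auto

lemma sub_add_mset_cases:
  assumes "R \<subseteq># add_mset x M"
  shows "R \<subseteq># M \<or> (x \<in># R \<and> R - {#x#} \<subseteq># M)"
proof (cases "x \<in># R")
  case True
  then have "R = add_mset x (R - {#x#})" by simp
  then have "R - {#x#} \<subseteq># M" using assms
    by (metis mset_subset_eq_add_mset_cancel)
  then show ?thesis using True by blast
next
  case False
  have "count R y \<le> count M y" for y
  proof -
    have "count R y \<le> count (add_mset x M) y" using assms by (simp add: subseteq_mset_def)
    then show ?thesis using False by (cases "y = x") (auto simp: not_in_iff)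
  qed
  then show ?thesis by (simp add: subseteq_mset_def)
qed

lemma sub_addI: "R \<subseteq># M \<Longrightarrow> R \<subseteq># add_mset x M"
  by (auto simp: subseteq_mset_def le_SucI)

lemma subs_add: "subs (add_mset x M) = subs M \<union> (\<lambda>a. x + a) ` subs M"
proof
  show "subs (add_mset x M) \<subseteq> subs M \<union> (\<lambda>a. x + a) ` subs M"
  proof
    fix a assume "a \<in> subs (add_mset x M)"
    then obtain R k where a: "a = sum_mset R + k" "R \<subseteq># add_mset x M" "k \<in> {0, zz}"
      unfolding subs_def by blast
    from sub_add_mset_cases[OF a(2)] show "a \<in> subs M \<union> (\<lambda>a. x + a) ` subs M"
    proof
      assume "R \<subseteq># M" then show ?thesis using a unfolding subs_def by blast
    next
      assume h: "x \<in># R \<and> R - {#x#} \<subseteq># M"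
      have "sum_mset R = x + sum_mset (R - {#x#})"
        using sum_mset.add_mset[of x "R - {#x#}"] insert_DiffM[of x R] h by simp
      then have "a = x + (sum_mset (R - {#x#}) + k)" using a(1) by (simp add: add.assoc)
      moreover have "sum_mset (R - {#x#}) + k \<in> subs M" using h a unfolding subs_def by blast
      ultimately show ?thesis by blast
    qed
  qed
next
  show "subs M \<union> (\<lambda>a. x + a) ` subs M \<subseteq> subs (add_mset x M)"
  proof
    fix a assume "a \<in> subs M \<union> (\<lambda>a. x + a) ` subs M"
    then show "a \<in> subs (add_mset x M)"
    proof
      assume "a \<in> subs M"
      then obtain R k where "a = sum_mset R + k" "R \<subseteq># M" "k \<in> {0, zz}"
        unfolding subs_def by blast
      moreover have "R \<subseteq># add_mset x M" using \<open>R \<subseteq># M\<close>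
        by (rule sub_addI)
      ultimately show ?thesis unfolding subs_def by blast
    next
      assume "a \<in> (\<lambda>a. x + a) ` subs M"
      then obtain R k where "a = x + (sum_mset R + k)" "R \<subseteq># M" "k \<in> {0, zz}"
        unfolding subs_def by blast
      moreover have "add_mset x R \<subseteq># add_mset x M" using \<open>R \<subseteq># M\<close> by simp
      moreover have "a = sum_mset (add_mset x R) + k" using calculation(1) by (simp add: add.assoc)
      ultimately show ?thesis unfolding subs_def by blast
    qed
  qed
qed

lemma split_inter: "R1 = (R1 \<inter># R2) + (R1 - R2)"
  by (rule multiset_eqI) simp

lemma subs_disj:
  assumes "Kzsf (add_mset x M)"
  shows "subs M \<inter> (\<lambda>a. x + a) ` subs M = {}"
proof (rule ccontr)
  assume "subs M \<inter> (\<lambda>a. x + a) ` subs M \<noteq> {}"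
  then obtain R1 k1 R2 k2 where h: "sum_mset R1 + k1 = x + (sum_mset R2 + k2)"
    "R1 \<subseteq># M" "R2 \<subseteq># M" "k1 \<in> {0, zz}" "k2 \<in> {0, zz}"
    unfolding subs_def by blast
  define I where "I = R1 \<inter># R2"
  define D1 where "D1 = R1 - R2"
  define D2 where "D2 = R2 - R1"
  have e1: "sum_mset R1 = sum_mset I + sum_mset D1"
    unfolding I_def D1_def by (subst split_inter[of R1 R2]) simp
  have ac: "R2 \<inter># R1 = R1 \<inter># R2" by (rule multiset_eqI) simp
  have e2: "sum_mset R2 = sum_mset I + sum_mset D2"
    unfolding I_def D2_def by (subst split_inter[of R2 R1]) (simp add: ac)
  define R where "R = add_mset x (D1 + D2)"
  have RM: "R \<subseteq># add_mset x M"
  proof -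
    have "count (D1 + D2) y \<le> count M y" for y
    proof -
      have "count R1 y \<le> count M y" "count R2 y \<le> count M y"
        using h(2,3) by (auto intro: mset_subset_eq_count)
      then show ?thesis by (simp add: D1_def D2_def; arith)
    qed
    then have "D1 + D2 \<subseteq># M" by (simp add: subseteq_mset_def)
    then show ?thesis unfolding R_def by simp
  qed
  have "sum_mset R = (sum_mset D1 + sum_mset D1) + (k1 + - k2)"
    using h(1) e1 e2 unfolding R_def by (simp add: algebra_simps)
  moreover have "(sum_mset D1 + sum_mset D1) + (k1 + - k2) \<in> {0, zz}"
    by (rule K_add[OF dblG K_add[OF h(4) K_neg[OF h(5)]]])
  ultimately have RK: "sum_mset R \<in> {0, zz}" by simp
  have "R \<noteq> {#}" unfolding R_def by simp
  then show False using assms RM RK unfolding Kzsf_def by blast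
qed

lemma Kzsf_mono: "Kzsf (add_mset x M) \<Longrightarrow> Kzsf M"
proof (unfold Kzsf_def, intro allI impI)
  fix R assume "\<forall>R. R \<subseteq># add_mset x M \<longrightarrow> R \<noteq> {#} \<longrightarrow> sum_mset R \<notin> {0, zz}"
    "R \<subseteq># M" "R \<noteq> {#}"
  then show "sum_mset R \<notin> {0, zz}" using sub_addI[of R M x] by simp
qed

lemma card_subs: "Kzsf V \<Longrightarrow> card (subs V) = 2 ^ (size V + 1)"
proof (induction V)
  case empty
  then show ?case using zz_ne by (simp add: subs_empty)
next
  case (add x M)
  have IH: "card (subs M) = 2 ^ (size M + 1)" using add Kzsf_mono by blast
  have "card (subs (add_mset x M)) = card (subs M) + card ((\<lambda>a. x + a) ` subs M)"
    unfolding subs_add using subs_disj[OF add.prems] by (simp add: card_Un_disjoint)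
  also have "card ((\<lambda>a. x + a) ` subs M) = card (subs M)"
    by (rule card_image) (simp add: inj_on_def)
  finally show ?case using IH by simp
qed

lemma Kzsf_size: "Kzsf V \<Longrightarrow> size V \<le> 4"
proof (rule ccontr)
  assume h: "Kzsf V" "\<not> size V \<le> 4"
  have "card (subs V) \<le> card (UNIV :: G set)" by (rule card_mono) auto
  also have "card (UNIV :: G set) = 32" by simp
  finally have P1: "(2::nat) ^ (size V + 1) \<le> 32" using card_subs[OF h(1)] by simp
  have P2: "(2::nat) ^ 6 \<le> 2 ^ (size V + 1)" using h(2) by (intro power_increasing) auto
  have "(2::nat) ^ 6 \<le> 32" using order_trans[OF P2 P1] .
  then show False by simp
qed


definition cfg :: "G multiset \<Rightarrow> G multiset \<Rightarrow> G multiset \<Rightarrow> G multiset \<Rightarrow>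
  G multiset \<Rightarrow> G multiset \<Rightarrow> G multiset \<Rightarrow> G multiset \<Rightarrow> G multiset \<Rightarrow> G multiset \<Rightarrow> bool" where
  "cfg U W1 W2 W3 S1 S2 S3 T1 T2 T3 \<longleftrightarrow> atom U \<and> size U = 7 \<and> atom W1 \<and> atom W2 \<and> atom W3 \<and>
     W1 = S1 + neg_seq T1 \<and> W2 = S2 + neg_seq T2 \<and> W3 = S3 + neg_seq T3 \<and>
     S1 + S2 + S3 = U \<and> T1 + T2 + T3 = U"

lemma cfg_cyc: "cfg U W1 W2 W3 S1 S2 S3 T1 T2 T3 \<Longrightarrow> cfg U W2 W3 W1 S2 S3 S1 T2 T3 T1"
  unfolding cfg_def by (elim conjE, intro conjI; (assumption | simp add: ac_simps))

lemma cfg_swap: "cfg U W1 W2 W3 S1 S2 S3 T1 T2 T3 \<Longrightarrow> cfg U W2 W1 W3 S2 S1 S3 T2 T1 T3"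
  unfolding cfg_def by (elim conjE, intro conjI; (assumption | simp add: ac_simps))

lemma U_sub: "atom U \<Longrightarrow> R \<subseteq># U \<Longrightarrow> zero_sum R \<Longrightarrow> R = {#} \<or> R = U"
  using atom_sub by blast

lemma atom_ne: "atom W \<Longrightarrow> W \<noteq> {#}" unfolding atom_def by simp

lemma atom_zs: "atom W \<Longrightarrow> zero_sum W" unfolding atom_def by simp

lemma sumST: "cfg U W1 W2 W3 S1 S2 S3 T1 T2 T3 \<Longrightarrow> sum_mset S1 = sum_mset T1"
  unfolding cfg_def using atom_zs[of W1] by (auto simp: zero_sum_def sum_neg)

lemma not_split: "atom U \<Longrightarrow> U = A + B \<Longrightarrow> A \<noteq> {#} \<Longrightarrow> B \<noteq> {#} \<Longrightarrow> zero_sum A \<Longrightarrow> zero_sum B \<Longrightarrow> False"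
  unfolding atom_def by blast

lemma nonempty1:
  assumes "cfg U W1 W2 W3 S1 S2 S3 T1 T2 T3"
  shows "S1 \<noteq> {#} \<and> T1 \<noteq> {#}"
proof -
  note a = assms[unfolded cfg_def]
  have T1U: "T1 \<subseteq># U" and S1U: "S1 \<subseteq># U" using a
    by (metis mset_subset_eq_add_left add.assoc)+
  have "S1 \<noteq> {#}"
  proof
    assume S1: "S1 = {#}"
    then have W1: "W1 = neg_seq T1" using a by simp
    have "zero_sum W1" using a atom_zs by blast
    then have "zero_sum T1" using W1 by (simp add: zero_sum_def sum_neg)
    then have "T1 = {#} \<or> T1 = U" using U_sub T1U a by blast
    then show False
    proof
      assume "T1 = {#}" then have "W1 = {#}" using W1 by (simp add: neg_seq_def)
      then show False using atom_ne a by blast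
    next
      assume T1: "T1 = U"
      then have "T2 = {#}" "T3 = {#}" using a by auto
      then have "W2 = S2" "W3 = S3" using a by (auto simp: neg_seq_def)
      moreover have "U = S2 + S3" using a S1 by simp
      ultimately show False using not_split[of U W2 W3] a atom_ne atom_zs by metis
    qed
  qed
  moreover have "T1 \<noteq> {#}"
  proof
    assume T1: "T1 = {#}"
    then have W1: "W1 = S1" using a by (simp add: neg_seq_def)
    then have "S1 = U" using U_sub[of U S1] S1U a atom_zs[of W1] atom_ne[of W1] by blast
    then have "S2 = {#}" "S3 = {#}" using a by auto
    then have W: "W2 = neg_seq T2" "W3 = neg_seq T3" using a by auto
    have z: "zero_sum W2" "zero_sum W3" using a atom_zs by blast+
    have "zero_sum T2" using z(1) W(1) by (simp add: zero_sum_def sum_neg)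
    moreover have "zero_sum T3" using z(2) W(2) by (simp add: zero_sum_def sum_neg)
    moreover have "T2 \<noteq> {#}" "T3 \<noteq> {#}" using W a atom_ne neg_empty_iff by metis+
    moreover have "U = T2 + T3" using a T1 by simp
    ultimately show False using not_split[of U T2 T3] a by blast
  qed
  ultimately show ?thesis by blast
qed

lemma nonempty_all:
  assumes "cfg U W1 W2 W3 S1 S2 S3 T1 T2 T3"
  shows "S1 \<noteq> {#}" "T1 \<noteq> {#}" "S2 \<noteq> {#}" "T2 \<noteq> {#}" "S3 \<noteq> {#}" "T3 \<noteq> {#}"
  using nonempty1[OF assms] nonempty1[OF cfg_cyc[OF assms]]
    nonempty1[OF cfg_cyc[OF cfg_cyc[OF assms]]] by auto

lemma caseB:
  assumes st: "cfg U W1 W2 W3 S1 S2 S3 T1 T2 T3" and P: "S3 + T3 = U"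
  shows False
proof -
  note a = st[unfolded cfg_def]
  note ne = nonempty_all[OF st]
  have "S1 + S2 + S3 = T3 + S3" using a P by (simp add: ac_simps)
  then have e1: "S1 + S2 = T3" by simp
  have "T1 + T2 + T3 = S3 + T3" using a P by (simp add: ac_simps)
  then have e2: "T1 + T2 = S3" by simp
  have W3: "W3 = (T1 + neg_seq S1) + (T2 + neg_seq S2)"
    using a e1[symmetric] e2[symmetric] by (simp add: neg_plus ac_simps)
  have "T1 + neg_seq S1 \<subseteq># W3" using W3 by simp
  moreover have "zero_sum (T1 + neg_seq S1)" using sumST[OF st] by (simp add: zero_sum_def sum_neg)
  moreover have "T1 + neg_seq S1 \<noteq> {#}" using ne by simp
  ultimately have "T1 + neg_seq S1 = W3" using atom_sub a by blast
  then have "T2 + neg_seq S2 = {#}" using W3 by simp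
  then show False using ne by simp
qed


lemma sub_eq_size: "A \<subseteq># B \<Longrightarrow> size A = size B \<Longrightarrow> A = B"
  using mset_subset_size subset_mset.le_less by fastforce

lemma disj_sub:
  assumes "S \<subseteq># A + B" "\<forall>y. \<not> (y \<in># S \<and> y \<in># A)"
  shows "S \<subseteq># B"
proof -
  have "count S y \<le> count B y" for y
  proof -
    have "count S y \<le> count A y + count B y" using assms(1) mset_subset_eq_count by fastforce
    moreover have "count S y = 0 \<or> count A y = 0" using assms(2) by (auto simp: not_in_iff)
    ultimately show ?thesis by auto
  qed
  then show ?thesis by (simp add: subseteq_mset_def)
qed

lemma caseC_aux:
  assumes st: "cfg U W1 W2 W3 S1 S2 S3 T1 T2 T3" and S3: "S3 = {#x#}" and T3: "T3 = {#x#}"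
  shows "\<forall>y. \<not> (y \<in># S1 \<and> y \<in># T1)"
proof (intro allI notI)
  fix y assume y: "y \<in># S1 \<and> y \<in># T1"
  note a = st[unfolded cfg_def]
  have "S1 = {#y#} \<and> T1 = {#y#}" using pair_lemma[of W1 S1 T1 y] a y by blast
  then have e: "S1 = {#y#}" "T1 = {#y#}" by auto
  have "{#y#} + S2 + {#x#} = {#y#} + T2 + {#x#}" using a e S3 T3 by simp
  then have "S2 = T2" by simp
  moreover have "size U = size S1 + size S2 + size S3" using a by (metis size_union)
  then have "size S2 = 5" using a e S3 by simp
  moreover have "S2 \<noteq> {#}" using calculation(2) by auto
  then obtain w where "w \<in># S2" by (meson multiset_nonemptyE)
  ultimately have "S2 = {#w#}" using pair_lemma[of W2 S2 T2 w] a by blast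
  then show False using \<open>size S2 = 5\<close> by simp
qed

lemma caseC:
  assumes st: "cfg U W1 W2 W3 S1 S2 S3 T1 T2 T3" and x: "x \<in># S3" "x \<in># T3"
  shows False
proof -
  note a = st[unfolded cfg_def]
  note ne = nonempty_all[OF st]
  have "S3 = {#x#} \<and> T3 = {#x#}" using pair_lemma[of W3 S3 T3 x] a x by blast
  then have S3: "S3 = {#x#}" and T3: "T3 = {#x#}" by auto
  have d1: "\<forall>y. \<not> (y \<in># S1 \<and> y \<in># T1)" using caseC_aux[OF st S3 T3] .
  have d2: "\<forall>y. \<not> (y \<in># S2 \<and> y \<in># T2)" using caseC_aux[OF cfg_swap[OF st] S3 T3] .
  have "S1 + S2 + {#x#} = T1 + T2 + {#x#}" using a S3 T3 by simp
  then have U': "S1 + S2 = T1 + T2" by simp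
  have "S1 \<subseteq># T1 + T2" unfolding U'[symmetric] by simp
  then have s1: "S1 \<subseteq># T2" using disj_sub[of S1 T1 T2] d1 by blast
  have "T2 + T1 = S1 + S2" using U' by (simp add: ac_simps)
  then have "S2 \<subseteq># T2 + T1" by simp
  then have s2: "S2 \<subseteq># T1" using disj_sub[of S2 T2 T1] d2 by blast
  have "size (S1 + S2) = size (T1 + T2)" using U' by simp
  then have sz: "size S1 + size S2 = size T1 + size T2" by simp
  have "size S1 \<le> size T2" "size S2 \<le> size T1" using s1 s2 size_mset_mono by auto
  then have "size S1 = size T2" "size S2 = size T1" using sz by linarith+
  then have "S1 = T2" "S2 = T1" using s1 s2 sub_eq_size by auto
  have sS: "sum_mset S1 = sum_mset T1" using sumST[OF st] .
  define u where "u = sum_mset (S1 + S2)"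
  have uK: "u \<in> {0, zz}" using dblG[of "sum_mset S1"] sS \<open>S2 = T1\<close> unfolding u_def by simp
  have U: "U = (S1 + S2) + {#x#}" using a S3 by simp
  have "sum_mset U = 0" using a atom_zs unfolding zero_sum_def by blast
  moreover have "sum_mset U = u + x" unfolding U u_def by simp
  ultimately have sU: "u + x = 0" by simp
  have sizeU': "size (S1 + S2) = 6" using a U by simp
  have "u \<noteq> 0"
  proof
    assume "u = 0"
    then have "S1 + S2 = {#} \<or> S1 + S2 = U" using U_sub[of U "S1 + S2"] a U
      unfolding u_def zero_sum_def by simp
    then show False using sizeU' a by auto
  qed
  then have "u = zz" using uK by simp
  have "x = - u" using sU by (simp add: eq_neg_iff_add_eq_0 add.commute)
  then have xz: "x = zz" using \<open>u = zz\<close> zz_neg by simp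
  obtain y0 where "y0 \<in># S1" using ne by (meson multiset_nonemptyE)
  then have y: "y0 \<in># S1 + S2" by simp
  define V where "V = (S1 + S2) - {#y0#}"
  have sV: "size V = 5" using y sizeU' unfolding V_def by (simp add: size_Diff_submset)
  have VU: "V \<subseteq># S1 + S2" unfolding V_def by simp
  have "Kzsf V"
  unfolding Kzsf_def
  proof (intro allI impI)
    fix R assume R: "R \<subseteq># V" "R \<noteq> {#}"
    have R6: "size R \<le> 5" using size_mset_mono[OF R(1)] sV by simp
    have RU': "R \<subseteq># S1 + S2" using R(1) VU by (rule subset_mset.order_trans)
    show "sum_mset R \<notin> {0, zz}"
    proof
      assume "sum_mset R \<in> {0, zz}"
      then show False
      proof
        assume "sum_mset R = 0"
        moreover have "S1 + S2 \<subseteq># U" using U by simp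
        then have "R \<subseteq># U" using RU' by (meson subset_mset.order_trans)
        ultimately have "R = U" using U_sub[of U R] a R(2) unfolding zero_sum_def by blast
        then show False using R6 a by simp
      next
        assume h: "sum_mset R \<in> {zz}"
        have "R + {#x#} \<subseteq># U" using RU' U by simp
        moreover have "zero_sum (R + {#x#})" using h xz zz_add by (simp add: zero_sum_def)
        ultimately have "R + {#x#} = U" using U_sub[of U "R + {#x#}"] a by auto
        then have "R = S1 + S2" using U by simp
        then show False using R6 sizeU' by simp
      qed
    qed
  qed
  then show False using Kzsf_size sV by fastforce
qed

lemma disjP:
  assumes "S \<subseteq># U" "T \<subseteq># U" "\<forall>y. \<not> (y \<in># S \<and> y \<in># T)"
  shows "S + T \<subseteq># U"
proof -
  have "count S y + count T y \<le> count U y" for y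
  proof -
    have "count S y \<le> count U y" "count T y \<le> count U y"
      using assms(1,2) mset_subset_eq_count by fastforce+
    moreover have "count S y = 0 \<or> count T y = 0" using assms(3) by (auto simp: not_in_iff)
    ultimately show ?thesis by auto
  qed
  then show ?thesis by (simp add: subseteq_mset_def)
qed

lemma Qlemma:
  assumes "atom U" "P \<subseteq># U" "P \<noteq> {#}" "sum_mset P \<in> {0, zz}"
  shows "U - P = {#} \<or> sum_mset (U - P) = zz"
proof -
  have "sum_mset U = 0" using assms(1) atom_zs zero_sum_def by blast
  then have s: "sum_mset (U - P) = - sum_mset P" using assms(2) by (simp add: sum_mset_diff)
  then have K: "sum_mset (U - P) \<in> {0, zz}" using K_neg[OF assms(4)] by simp
  show ?thesis
  proof (cases "sum_mset (U - P) = 0")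
    case True
    have "U - P = {#} \<or> U - P = U" using U_sub[of U "U - P"] assms(1) True
      by (simp add: zero_sum_def)
    moreover have "U - P \<noteq> U"
    proof
      assume "U - P = U"
      then have "size (U - P) = size U" by simp
      then have "size P = 0" using size_Diff_submset[OF assms(2)]
        size_mset_mono[OF assms(2)] by arith
      then show False using assms(3) by simp
    qed
    ultimately show ?thesis by blast
  next
    case False then show ?thesis using K by simp
  qed
qed

lemma diff_empty_eq: "P \<subseteq># U \<Longrightarrow> U - P = {#} \<Longrightarrow> P = U"
proof -
  assume a: "P \<subseteq># U" "U - P = {#}"
  have "size (U - P) = 0" using a by simp
  then have "size P = size U" using size_Diff_submset[OF a(1)] size_mset_mono[OF a(1)] by arith
  then show "P = U" using sub_eq_size a by blast
qed

lemma caseD: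
  assumes st: "cfg U W1 W2 W3 S1 S2 S3 T1 T2 T3"
    and d1: "\<forall>y. \<not> (y \<in># S1 \<and> y \<in># T1)"
    and d2: "\<forall>y. \<not> (y \<in># S2 \<and> y \<in># T2)"
    and d3: "\<forall>y. \<not> (y \<in># S3 \<and> y \<in># T3)"
  shows False
proof -
  note a = st[unfolded cfg_def]
  note ne = nonempty_all[OF st]
  have st1: "cfg U W2 W3 W1 S2 S3 S1 T2 T3 T1" using cfg_cyc[OF st] .
  have st2: "cfg U W3 W1 W2 S3 S1 S2 T3 T1 T2" using cfg_cyc[OF st1] .
  have sS: "sum_mset S1 = sum_mset T1" "sum_mset S2 = sum_mset T2" "sum_mset S3 = sum_mset T3"
    using sumST[OF st] sumST[OF st1] sumST[OF st2] by simp_all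
  have sub: "S1 \<subseteq># U" "S2 \<subseteq># U" "S3 \<subseteq># U" "T1 \<subseteq># U" "T2 \<subseteq># U" "T3 \<subseteq># U"
  proof -
    have e: "S1 + S2 + S3 = U" "T1 + T2 + T3 = U" using a by auto
    have "S1 \<subseteq># S1 + S2 + S3" "S2 \<subseteq># S1 + S2 + S3" "S3 \<subseteq># S1 + S2 + S3"
      "T1 \<subseteq># T1 + T2 + T3" "T2 \<subseteq># T1 + T2 + T3" "T3 \<subseteq># T1 + T2 + T3"
      by (simp_all add: add.assoc)
    then show "S1 \<subseteq># U" "S2 \<subseteq># U" "S3 \<subseteq># U" "T1 \<subseteq># U" "T2 \<subseteq># U" "T3 \<subseteq># U"
      unfolding e by simp_all

  qed
  have P: "S1 + T1 \<subseteq># U" "S2 + T2 \<subseteq># U" "S3 + T3 \<subseteq># U"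
    using disjP[OF sub(1) sub(4) d1] disjP[OF sub(2) sub(5) d2] disjP[OF sub(3) sub(6) d3] by auto
  have PK: "sum_mset (S1 + T1) \<in> {0, zz}" "sum_mset (S2 + T2) \<in> {0, zz}" "sum_mset (S3 + T3) \<in> {0, zz}"
  proof -
    have "sum_mset (S1 + T1) = sum_mset S1 + sum_mset S1" "sum_mset (S2 + T2) = sum_mset S2 + sum_mset S2"
      "sum_mset (S3 + T3) = sum_mset S3 + sum_mset S3" using sS by simp_all
    then show "sum_mset (S1 + T1) \<in> {0, zz}" "sum_mset (S2 + T2) \<in> {0, zz}" "sum_mset (S3 + T3) \<in> {0, zz}"
      using dblG by simp_all
  qed
  have Pne: "S1 + T1 \<noteq> {#}" "S2 + T2 \<noteq> {#}" "S3 + T3 \<noteq> {#}" using ne by auto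
  have aU: "atom U" using a by blast
  have Q1: "U - (S1 + T1) = {#} \<or> sum_mset (U - (S1 + T1)) = zz" using Qlemma[OF aU P(1) Pne(1) PK(1)] .
  have Q2: "U - (S2 + T2) = {#} \<or> sum_mset (U - (S2 + T2)) = zz" using Qlemma[OF aU P(2) Pne(2) PK(2)] .
  have Q3: "U - (S3 + T3) = {#} \<or> sum_mset (U - (S3 + T3)) = zz" using Qlemma[OF aU P(3) Pne(3) PK(3)] .
  show False
  proof (cases "U - (S1 + T1) = {#} \<or> U - (S2 + T2) = {#} \<or> U - (S3 + T3) = {#}")
    case True
    then show False
    proof (elim disjE)
      assume "U - (S1 + T1) = {#}"
      then have "S1 + T1 = U" using diff_empty_eq P(1) by blast
      then show False using caseB[OF st1] by blast
    next
      assume "U - (S2 + T2) = {#}"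
      then have "S2 + T2 = U" using diff_empty_eq P(2) by blast
      then show False using caseB[OF st2] by blast
    next
      assume "U - (S3 + T3) = {#}"
      then have "S3 + T3 = U" using diff_empty_eq P(3) by blast
      then show False using caseB[OF st] by blast
    qed
  next
    case False
    then have z: "sum_mset (U - (S1 + T1)) = zz" "sum_mset (U - (S2 + T2)) = zz"
      "sum_mset (U - (S3 + T3)) = zz" using Q1 Q2 Q3 by auto
    have eS: "S1 + S2 + S3 = U" and eT: "T1 + T2 + T3 = U" using a by auto
    have QU: "(U - (S1 + T1)) + (U - (S2 + T2)) + (U - (S3 + T3)) = U"
    proof (rule multiset_eqI)
      fix y
      have c1: "count S1 y + count S2 y + count S3 y = count U y"
        using arg_cong[OF eS, of "\<lambda>M. count M y"] by simp
      have c2: "count T1 y + count T2 y + count T3 y = count U y"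
        using arg_cong[OF eT, of "\<lambda>M. count M y"] by simp
      have c3: "count S1 y + count T1 y \<le> count U y" "count S2 y + count T2 y \<le> count U y"
        "count S3 y + count T3 y \<le> count U y" using P mset_subset_eq_count by fastforce+
      have "count ((U - (S1 + T1)) + (U - (S2 + T2)) + (U - (S3 + T3))) y =
        (count U y - (count S1 y + count T1 y)) + (count U y - (count S2 y + count T2 y))
        + (count U y - (count S3 y + count T3 y))" by simp
      also have "\<dots> = count U y" using c1 c2 c3 by linarith
      finally show "count ((U - (S1 + T1)) + (U - (S2 + T2)) + (U - (S3 + T3))) y = count U y" .
    qed
    have "sum_mset U = sum_mset ((U - (S1 + T1)) + (U - (S2 + T2)) + (U - (S3 + T3)))"
      by (simp only: QU)
    also have "\<dots> = zz + zz + zz" by (simp only: sum_mset.union z)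
    also have "\<dots> = zz" using zz_add by (simp add: add.assoc)
    finally have "sum_mset U = zz" .
    moreover have "sum_mset U = 0" using aU atom_zs zero_sum_def by blast
    ultimately show False using zz_ne by simp
  qed
qed

lemma size3: "size (F :: 'b multiset) = 3 \<Longrightarrow> \<exists>a b c. F = {#a, b, c#}"
proof -
  assume h: "size F = 3"
  obtain a F1 where "F = add_mset a F1" "size F1 = 2"
    using h size_mset_SucE[of F 2] by (metis add_mset_add_single numeral_3_eq_3 numeral_2_eq_2 add.commute)
  moreover obtain b F2 where "F1 = add_mset b F2" "size F2 = 1"
    using calculation(2) size_mset_SucE[of F1 1] by (metis add_mset_add_single numeral_2_eq_2 One_nat_def add.commute)
  moreover obtain c where "F2 = {#c#}" using calculation(4) size_1_singleton_mset by blast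
  ultimately show ?thesis by blast
qed

theorem lemma5p6:
  fixes U :: "G multiset"
  assumes "atom U" and "size U = 7"
  shows "3 \<notin> lengths (U + neg_seq U)"
proof
  assume "3 \<in> lengths (U + neg_seq U)"
  then obtain F where F: "\<forall>A\<in>#F. atom A" "sum_mset F = U + neg_seq U" "size F = 3"
    unfolding lengths_def by blast
  obtain W1 W2 W3 where FW: "F = {#W1, W2, W3#}" using size3[OF F(3)] by blast
  have at: "atom W1" "atom W2" "atom W3" using F(1) FW by auto
  have "W1 + (W2 + W3) = U + neg_seq U" using F(2) FW by (simp add: ac_simps)
  then obtain X1 Y1 X2 Y2 where r1: "W1 = X1 + Y1" "W2 + W3 = X2 + Y2" "U = X1 + X2"
    "neg_seq U = Y1 + Y2" using riesz by blast
  from riesz[OF r1(2)] obtain S2 Z2 S3 Z3 where r2: "W2 = S2 + Z2" "W3 = S3 + Z3"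
    "X2 = S2 + S3" "Y2 = Z2 + Z3" by blast
  define T1 where "T1 = neg_seq Y1"
  define T2 where "T2 = neg_seq Z2"
  define T3 where "T3 = neg_seq Z3"
  have Y: "Y1 = neg_seq T1" "Z2 = neg_seq T2" "Z3 = neg_seq T3"
    unfolding T1_def T2_def T3_def by (simp_all add: neg_neg)
  have "T1 + T2 + T3 = neg_seq (Y1 + Y2)" unfolding T1_def T2_def T3_def r2(4) by (simp add: neg_plus add.assoc)
  also have "\<dots> = U" unfolding r1(4)[symmetric] by (simp add: neg_neg)
  finally have TU: "T1 + T2 + T3 = U" .
  have st: "cfg U W1 W2 W3 X1 S2 S3 T1 T2 T3"
    unfolding cfg_def using assms at r1 r2 TU Y by (simp add: add.assoc)
  show False
  proof (cases "\<exists>x. (x \<in># X1 \<and> x \<in># T1) \<or> (x \<in># S2 \<and> x \<in># T2) \<or> (x \<in># S3 \<and> x \<in># T3)")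
    case True
    then obtain x where "(x \<in># X1 \<and> x \<in># T1) \<or> (x \<in># S2 \<and> x \<in># T2) \<or> (x \<in># S3 \<and> x \<in># T3)"
      by blast
    then show False
    proof (elim disjE conjE)
      assume "x \<in># X1" "x \<in># T1"
      then show False using caseC[OF cfg_cyc[OF st]] by blast
    next
      assume "x \<in># S2" "x \<in># T2"
      then show False using caseC[OF cfg_cyc[OF cfg_cyc[OF st]]] by blast
    next
      assume "x \<in># S3" "x \<in># T3"
      then show False using caseC[OF st] by blast
    qed
  next
    case False
    then show False using caseD[OF st] by blast
  qed
qed

end
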